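(* Let $(\Omega,\mathbb B(\Omega),\mu,T)$ be a measure-preserving dynamical system and let $\mathbf X=(X_1,\dots,X_N)$ be an $\mathbb R^N$-valued random vector on $(\Omega,\mathbb B(\Omega))$ satisfying condition (OR), i.e. $h_\mu(T)=\lim_{d\to\infty}h_\mu(T,\mathcal P^{\mathbf X}(d))$. Then: (i) $h_\mu(T)\le \limsup_{d\to\infty}h^{\mathbf X}_{\mu,\mathrm{cond}}(T,d)\le \limsup_{d\to\infty}h^{\mathbf X}_{\mu,\triangle}(T,d)$. (ii) If moreover either there is $d_0\in\mathbb N$ with $h^{\mathbf X}_\mu(T,d)\ge h^{\mathbf X}_\mu(T,d+1)$ for all $d\ge d_0$, or the limit $\lim_{d\to\infty}h^{\mathbf X}_{\mu,\triangle}(T,d)$ exists, then $$h_\mu(T)\le \limsup_{d\to\infty}h^{\mathbf X}_{\mu,\mathrm{cond}}(T,d)\le \limsup_{d\to\infty}h^{\mathbf X}_{\mu,\triangle}(T,d)\le \limsup_{d\to\infty}h^{\mathbf X}_{\mu}(T,d).$$ Both statements remain true with all upper limits replaced by lower limits.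
   Context: A measure-preserving dynamical system $(\Omega,\mathbb B(\Omega),\mu,T)$ consists of a nonempty topological space $\Omega$ with Borel $\sigma$-algebra $\mathbb B(\Omega)$, a probability measure $\mu$, and a measurable map $T:\Omega\to\Omega$ with $\mu(T^{-1}B)=\mu(B)$ for all $B\in\mathbb B(\Omega)$. For a finite partition $\mathcal P=\{P_0,\dots,P_l\}\subset\mathbb B(\Omega)$ of $\Omega$: $H(\mathcal P)=-\sum_{P\in\mathcal P}\mu(P)\ln\mu(P)$ (with $0\ln0=0$); $\mathcal P_n$ is the partition consisting of the sets $P_{a_0}\cap T^{-1}(P_{a_1})\cap\dots\cap T^{-(n-1)}(P_{a_{n-1}})$, $a_i\in\{0,\dots,l\}$; $h_\mu(T,\mathcal P)=\lim_{n\to\infty}(H(\mathcal P_{n+1})-H(\mathcal P_n))$; the Kolmogorov–Sinai entropy is $h_\mu(T)=\sup_{\mathcal P}h_\mu(T,\mathcal P)$ over finite partitions. Let $\Pi_d$ be the set of permutations of $\{0,1,\dots,d\}$. A vector $(x_0,\dots,x_d)\in\mathbb R^{d+1}$ has ordinal pattern $\pi=(r_0,\dots,r_d)\in\Pi_d$ if $x_{r_0}\ge x_{r_1}\ge\dots\ge x_{r_d}$ and $r_{l-1}>r_l$ whenever $x_{r_{l-1}}=x_{r_l}$. For a random vector $\mathbf X=(X_1,\dots,X_N)$ and $d\in\mathbb N$, the ordinal partition $\mathcal P^{\mathbf X}(d)$ consists of the sets $P_{(\pi_1,\dots,\pi_N)}=\{\omega: (X_i(T^{d}\omega),X_i(T^{d-1}\omega),\dots,X_i(T\omega),X_i(\omega))\text{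 has ordinal pattern }\pi_i\text{ for } i=1,\dots,N\}$, $\pi_i\in\Pi_d$. Permutation entropy: $h^{\mathbf X}_\mu(T,d)=\frac1d H(\mathcal P^{\mathbf X}(d))$. Sorting entropy: $h^{\mathbf X}_{\mu,\triangle}(T,d)=H(\mathcal P^{\mathbf X}(d+1))-H(\mathcal P^{\mathbf X}(d))$. Conditional entropy of ordinal patterns: $h^{\mathbf X}_{\mu,\mathrm{cond}}(T,d)=H(\mathcal P^{\mathbf X}(d)_2)-H(\mathcal P^{\mathbf X}(d))$. *)

theory Defs
  imports "HOL-Probability.Probability"
begin

definition mpds :: "('a::topological_space) measure \<Rightarrow> ('a \<Rightarrow> 'a) \<Rightarrow> bool" where
  "mpds M T \<longleftrightarrow> prob_space M \<and> sets M = sets (borel :: 'a measure) \<and>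
     T \<in> measurable M M \<and> (\<forall>B \<in> sets M. measure M (T -` B \<inter> space M) = measure M B)"

definition fin_partition :: "'a measure \<Rightarrow> 'a set set \<Rightarrow> bool" where
  "fin_partition M P \<longleftrightarrow> finite P \<and> P \<subseteq> sets M \<and> \<Union>P = space M \<and>
     (\<forall>A\<in>P. \<forall>B\<in>P. A \<noteq> B \<longrightarrow> A \<inter> B = {})"

text \<open>Shannon entropy of a partition, H(P) = - sum mu(P) ln mu(P); note ln 0 = 0 in Isabelle.\<close>
definition part_entropy :: "'a measure \<Rightarrow> 'a set set \<Rightarrow> real" where
  "part_entropy M P = - (\<Sum>A\<in>P. measure M A * ln (measure M A))"

definition refine :: "'a measure \<Rightarrow> ('a \<Rightarrow> 'a) \<Rightarrow> 'a set set \<Rightarrow> nat \<Rightarrow> 'a set set" where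
  "refine M T P n = (\<lambda>a. {\<omega> \<in> space M. \<forall>k<n. (T ^^ k) \<omega> \<in> a k}) ` (\<Pi>\<^sub>E k\<in>{..<n}. P)"

definition ent_rel :: "'a measure \<Rightarrow> ('a \<Rightarrow> 'a) \<Rightarrow> 'a set set \<Rightarrow> real" where
  "ent_rel M T P = lim (\<lambda>n. part_entropy M (refine M T P (Suc n)) - part_entropy M (refine M T P n))"

definition ks_entropy :: "'a measure \<Rightarrow> ('a \<Rightarrow> 'a) \<Rightarrow> ereal" where
  "ks_entropy M T = (SUP P \<in> {P. fin_partition M P}. ereal (ent_rel M T P))"

definition perms :: "nat \<Rightarrow> nat list set" where
  "perms d = {r. length r = Suc d \<and> set r = {0..d}}"

definition has_pattern :: "(nat \<Rightarrow> real) \<Rightarrow> nat \<Rightarrow> nat list \<Rightarrow> bool" where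
  "has_pattern x d r \<longleftrightarrow> r \<in> perms d \<and>
     (\<forall>l\<in>{1..d}. x (r ! (l - 1)) \<ge> x (r ! l) \<and>
        (x (r ! (l - 1)) = x (r ! l) \<longrightarrow> r ! (l - 1) > r ! l))"

definition ord_part :: "'a measure \<Rightarrow> ('a \<Rightarrow> 'a) \<Rightarrow> (nat \<Rightarrow> 'a \<Rightarrow> real) \<Rightarrow> nat \<Rightarrow> nat \<Rightarrow> 'a set set" where
  "ord_part M T X N d =
     (\<lambda>ps. {\<omega> \<in> space M. \<forall>i<N. has_pattern (\<lambda>j. X i ((T ^^ (d - j)) \<omega>)) d (ps i)})
       ` (\<Pi>\<^sub>E i\<in>{..<N}. perms d)"

definition perm_entropy :: "'a measure \<Rightarrow> ('a \<Rightarrow> 'a) \<Rightarrow> (nat \<Rightarrow> 'a \<Rightarrow> real) \<Rightarrow> nat \<Rightarrow> nat \<Rightarrow> real" where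
  "perm_entropy M T X N d = part_entropy M (ord_part M T X N d) / real d"

definition sort_entropy :: "'a measure \<Rightarrow> ('a \<Rightarrow> 'a) \<Rightarrow> (nat \<Rightarrow> 'a \<Rightarrow> real) \<Rightarrow> nat \<Rightarrow> nat \<Rightarrow> real" where
  "sort_entropy M T X N d = part_entropy M (ord_part M T X N (Suc d)) - part_entropy M (ord_part M T X N d)"

definition cond_entropy :: "'a measure \<Rightarrow> ('a \<Rightarrow> 'a) \<Rightarrow> (nat \<Rightarrow> 'a \<Rightarrow> real) \<Rightarrow> nat \<Rightarrow> nat \<Rightarrow> real" where
  "cond_entropy M T X N d = part_entropy M (refine M T (ord_part M T X N d) 2) - part_entropy M (ord_part M T X N d)"

end

theory Submission
  imports Defs
begin


definition Rr :: "(nat \<Rightarrow> real) \<Rightarrow> nat \<Rightarrow> nat \<Rightarrow> bool" where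
  "Rr x i j \<longleftrightarrow> x j < x i \<or> (x i = x j \<and> j < i)"

lemma Rr_trans: "Rr x i j \<Longrightarrow> Rr x j k \<Longrightarrow> Rr x i k"
  unfolding Rr_def by auto
lemma Rr_transp: "transp (Rr x)"
  by (meson Rr_trans transpI)
lemma Rr_irrefl: "\<not> Rr x i i" unfolding Rr_def by auto
lemma Rr_asym: "Rr x i j \<Longrightarrow> \<not> Rr x j i" unfolding Rr_def by auto
lemma Rr_total: "i \<noteq> j \<Longrightarrow> Rr x i j \<or> Rr x j i" unfolding Rr_def by auto

lemma has_pattern_Rr:
  "has_pattern x d r \<longleftrightarrow> r \<in> perms d \<and> (\<forall>l\<in>{1..d}. Rr x (r ! (l - 1)) (r ! l))"
  unfolding has_pattern_def Rr_def by (auto simp: le_less)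

lemma perms_distinct: "r \<in> perms d \<Longrightarrow> distinct r"
  unfolding perms_def by (auto intro: card_distinct)

lemma has_pattern_sorted:
  assumes "has_pattern x d r" shows "sorted_wrt (Rr x) r"
proof -
  have p: "r \<in> perms d" and c: "\<forall>l\<in>{1..d}. Rr x (r ! (l - 1)) (r ! l)"
    using assms has_pattern_Rr by auto
  have len: "length r = Suc d" using p perms_def by auto
  show ?thesis
    unfolding sorted_wrt_iff_nth_Suc_transp[OF Rr_transp]
  proof (intro allI impI)
    fix i assume "Suc i < length r"
    then have "Suc i \<in> {1..d}" using len by auto
    then show "Rr x (r ! i) (r ! Suc i)" using c by fastforce
  qed
qed

lemma has_pattern_Rr_eq:
  assumes "has_pattern x d r" "has_pattern y d r" "i \<le> d" "j \<le> d"
  shows "Rr x i j = Rr y i j"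
proof -
  have sx: "sorted_wrt (Rr x) r" and sy: "sorted_wrt (Rr y) r"
    using assms has_pattern_sorted by auto
  have p: "r \<in> perms d" using assms has_pattern_Rr by auto
  then have st: "set r = {0..d}" unfolding perms_def by auto
  have "i \<in> set r" "j \<in> set r" using st assms(3,4) by auto
  then obtain a b where a: "a < length r" "r ! a = i" and b: "b < length r" "r ! b = j"
    by (auto simp: in_set_conv_nth)
  consider "a < b" | "a = b" | "b < a" by arith
  then show ?thesis
  proof cases
    case 1
    have "Rr x (r ! a) (r ! b)" by (rule sorted_wrt_nth_less[OF sx 1 b(1)])
    moreover have "Rr y (r ! a) (r ! b)" by (rule sorted_wrt_nth_less[OF sy 1 b(1)])
    ultimately show ?thesis using a b by simp
  next
    case 2 then show ?thesis using a b Rr_irrefl by auto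
  next
    case 3
    have "Rr x (r ! b) (r ! a)" by (rule sorted_wrt_nth_less[OF sx 3 a(1)])
    moreover have "Rr y (r ! b) (r ! a)" by (rule sorted_wrt_nth_less[OF sy 3 a(1)])
    ultimately have "\<not> Rr x i j" "\<not> Rr y i j" using a b Rr_asym by auto
    then show ?thesis by simp
  qed
qed

lemma has_pattern_cong:
  assumes "\<And>i j. i \<le> d \<Longrightarrow> j \<le> d \<Longrightarrow> Rr x i j = Rr y i j"
  shows "has_pattern x d r = has_pattern y d r"
proof -
  have "r \<in> perms d \<Longrightarrow> l \<in> {1..d} \<Longrightarrow> Rr x (r ! (l - 1)) (r ! l) = Rr y (r ! (l - 1)) (r ! l)" for l
  proof -
    assume "r \<in> perms d" "l \<in> {1..d}"
    then have "r ! (l-1) \<in> set r" "r ! l \<in> set r" unfolding perms_def by auto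
    then show ?thesis using assms \<open>r \<in> perms d\<close> unfolding perms_def by auto
  qed
  then show ?thesis unfolding has_pattern_Rr by blast
qed

definition rk :: "(nat \<Rightarrow> real) \<Rightarrow> nat \<Rightarrow> nat \<Rightarrow> nat" where
  "rk x d i = card {j\<in>{0..d}. Rr x j i}"

lemma rk_less: assumes "Rr x i j" "i \<le> d" shows "rk x d i < rk x d j"
proof -
  have "{k\<in>{0..d}. Rr x k i} \<subseteq> {k\<in>{0..d}. Rr x k j}"
    using assms(1) Rr_trans by blast
  moreover have "i \<in> {k\<in>{0..d}. Rr x k j}" "i \<notin> {k\<in>{0..d}. Rr x k i}"
    using assms Rr_irrefl by auto
  ultimately have "{k\<in>{0..d}. Rr x k i} \<subset> {k\<in>{0..d}. Rr x k j}" by blast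
  then show ?thesis unfolding rk_def by (simp add: psubset_card_mono)
qed

lemma has_pattern_uniq:
  assumes "has_pattern x d r" "has_pattern x d r'" shows "r = r'"
proof -
  have p: "r \<in> perms d" "r' \<in> perms d" using assms has_pattern_Rr by auto
  have "sorted_wrt (<) (map (rk x d) q)" if "has_pattern x d q" for q
  proof -
    have sq: "sorted_wrt (Rr x) q" using has_pattern_sorted that .
    have "set q = {0..d}" using that has_pattern_Rr perms_def by auto
    then show ?thesis unfolding sorted_wrt_map
      by (intro sorted_wrt_mono_rel[OF _ sq]) (auto intro: rk_less)
  qed
  then have s: "sorted_wrt (<) (map (rk x d) r)" "sorted_wrt (<) (map (rk x d) r')" using assms by auto
  have st: "set r = {0..d}" "set r' = {0..d}" using p perms_def by auto
  have "map (rk x d) r = sorted_list_of_set (rk x d ` {0..d})"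
  proof -
    have "sorted (map (rk x d) r)" "distinct (map (rk x d) r)" using s(1) strict_sorted_iff by auto
    then have "sorted_list_of_set (set (map (rk x d) r)) = map (rk x d) r"
      by (rule sorted_list_of_set.idem_if_sorted_distinct)
    then show ?thesis using st(1) by simp
  qed
  moreover have "map (rk x d) r' = sorted_list_of_set (rk x d ` {0..d})"
  proof -
    have "sorted (map (rk x d) r')" "distinct (map (rk x d) r')" using s(2) strict_sorted_iff by auto
    then have "sorted_list_of_set (set (map (rk x d) r')) = map (rk x d) r'"
      by (rule sorted_list_of_set.idem_if_sorted_distinct)
    then show ?thesis using st(2) by simp
  qed
  ultimately have "map (rk x d) r = map (rk x d) r'" by simp
  moreover have "inj_on (rk x d) (set r \<union> set r')"
  proof (rule inj_onI)
    fix i j assume ij: "i \<in> set r \<union> set r'" "j \<in> set r \<union> set r'" "rk x d i = rk x d j"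
    show "i = j"
    proof (rule ccontr)
      assume "i \<noteq> j"
      then have "Rr x i j \<or> Rr x j i" by (rule Rr_total)
      moreover have "i \<le> d" "j \<le> d" using ij st by auto
      ultimately show False using rk_less ij(3) by (metis less_irrefl)
    qed
  qed
  ultimately show ?thesis using inj_on_map_eq_map[of "rk x d" r r'] by blast
qed

lemma has_pattern_ex: "\<exists>r. has_pattern x d r"
proof -
  define r where "r = sort_key (rk x d) [0..<Suc d]"
  have len: "length r = Suc d" and st: "set r = {0..d}" unfolding r_def by auto
  have so: "sorted (map (rk x d) r)" unfolding r_def by simp
  have dr: "distinct r" unfolding r_def by simp
  have "sorted_wrt (Rr x) r"
    unfolding sorted_wrt_iff_nth_less
  proof (intro allI impI)
    fix a b assume ab: "a < b" "b < length r"
    then have ne: "r ! a \<noteq> r ! b" using dr by (simp add: nth_eq_iff_index_eq)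
    have le: "rk x d (r ! a) \<le> rk x d (r ! b)" using so ab by (simp add: sorted_iff_nth_mono)
    have "r ! a \<in> set r" "r ! b \<in> set r" using ab by auto
    then have "r ! a \<le> d" "r ! b \<le> d" using st by auto
    then show "Rr x (r ! a) (r ! b)" using Rr_total[OF ne, of x] rk_less[of x "r ! b" "r ! a" d] le by auto
  qed
  then have "\<forall>l\<in>{1..d}. Rr x (r ! (l - 1)) (r ! l)"
    using len by (auto simp: sorted_wrt_iff_nth_less)
  then show ?thesis using len st unfolding has_pattern_Rr perms_def by auto
qed



definition Hf :: "'a measure \<Rightarrow> ('a \<Rightarrow> 'b) \<Rightarrow> real" where
  "Hf M F = - (\<Sum>v\<in>F ` space M. measure M (F -` {v} \<inter> space M) * ln (measure M (F -` {v} \<inter> space M)))"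

context prob_space begin

lemma marg:
  assumes F: "simple_function M F" and G: "\<And>\<omega>. \<omega> \<in> space M \<Longrightarrow> G \<omega> = h (F \<omega>)"
  shows "(\<Sum>w\<in>F`space M. prob (F -` {w} \<inter> space M) * \<phi> (h w))
       = (\<Sum>v\<in>G`space M. prob (G -` {v} \<inter> space M) * \<phi> v)"
proof -
  have fin: "finite (F`space M)" using F simple_functionD by auto
  have img: "G`space M = h`(F`space M)" using G by (auto simp: image_image)
  have finG: "finite (G`space M)" using img fin by auto
  have pG: "prob (G -` {v} \<inter> space M) = (\<Sum>w\<in>{w\<in>F`space M. h w = v}. prob (F -` {w} \<inter> space M))" for v
  proof -
    have "G -` {v} \<inter> space M = (\<Union>w\<in>{w\<in>F`space M. h w = v}. F -` {w} \<inter> space M)"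
      using G by auto
    moreover have "measure M (\<Union>w\<in>{w\<in>F`space M. h w = v}. F -` {w} \<inter> space M)
       = (\<Sum>w\<in>{w\<in>F`space M. h w = v}. prob (F -` {w} \<inter> space M))"
      by (rule measure_finite_Union) (use fin F simple_functionD(2) in \<open>auto simp: disjoint_family_on_def\<close>)
    ultimately show ?thesis by simp
  qed
  have "(\<Sum>v\<in>G`space M. prob (G -` {v} \<inter> space M) * \<phi> v)
      = (\<Sum>v\<in>G`space M. \<Sum>w\<in>{w\<in>F`space M. h w = v}. prob (F -` {w} \<inter> space M) * \<phi> (h w))"
    unfolding pG sum_distrib_right by (intro sum.cong refl) auto
  also have "\<dots> = (\<Sum>w\<in>F`space M. prob (F -` {w} \<inter> space M) * \<phi> (h w))"
    by (rule sum.group) (use fin finG img in auto)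
  finally show ?thesis by simp
qed

lemma simple_fun_of:
  assumes F: "simple_function M F" and G: "\<And>\<omega>. \<omega> \<in> space M \<Longrightarrow> G \<omega> = h (F \<omega>)"
  shows "simple_function M G"
proof -
  have "simple_function M (h \<circ> F)" using F by auto
  then show ?thesis using simple_function_cong[of M G "h \<circ> F"] G by auto
qed

lemma Hf_DP:
  assumes F: "simple_function M F" and G: "\<And>\<omega>. \<omega> \<in> space M \<Longrightarrow> G \<omega> = h (F \<omega>)"
  shows "Hf M G \<le> Hf M F"
proof -
  have sG: "simple_function M G" using simple_fun_of[where G=G and h=h, OF F G] .
  have "Hf M G = - (\<Sum>w\<in>F`space M. prob (F -` {w} \<inter> space M) * ln (prob (G -` {h w} \<inter> space M)))"
    unfolding Hf_def using marg[where G=G and h=h, OF F G, of "\<lambda>v. ln (prob (G -` {v} \<inter> space M))"] by simp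
  also have "\<dots> \<le> - (\<Sum>w\<in>F`space M. prob (F -` {w} \<inter> space M) * ln (prob (F -` {w} \<inter> space M)))"
  proof -
    have "prob (F -` {w} \<inter> space M) * ln (prob (F -` {w} \<inter> space M))
       \<le> prob (F -` {w} \<inter> space M) * ln (prob (G -` {h w} \<inter> space M))" for w
    proof (cases "prob (F -` {w} \<inter> space M) = 0")
      case False
      then have pos: "0 < prob (F -` {w} \<inter> space M)" using measure_nonneg[of M] by (simp add: less_le)
      have "prob (F -` {w} \<inter> space M) \<le> prob (G -` {h w} \<inter> space M)"
        by (rule finite_measure_mono) (use G sG simple_functionD(2) in auto)
      then show ?thesis using pos by (intro mult_left_mono) auto
    qed simp
    then show ?thesis by (simp add: sum_mono)
  qed
  also have "\<dots> = Hf M F" unfolding Hf_def by simp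
  finally show ?thesis .
qed

lemma Hf_eq:
  assumes F: "simple_function M F" and G: "\<And>\<omega>. \<omega> \<in> space M \<Longrightarrow> G \<omega> = h (F \<omega>)"
    and F': "\<And>\<omega>. \<omega> \<in> space M \<Longrightarrow> F \<omega> = h' (G \<omega>)"
  shows "Hf M G = Hf M F"
  using Hf_DP[where G=G and h=h, OF F G] Hf_DP[where G=F and h=h', OF simple_fun_of[where G=G and h=h, OF F G] F'] by simp

lemma Hf_SSA:
  assumes X: "simple_function M X" and Y: "simple_function M Y" and Z: "simple_function M Z"
  shows "Hf M (\<lambda>\<omega>. (X \<omega>, Y \<omega>, Z \<omega>)) + Hf M Z \<le> Hf M (\<lambda>\<omega>. (X \<omega>, Z \<omega>)) + Hf M (\<lambda>\<omega>. (Y \<omega>, Z \<omega>))"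
proof -
  interpret information_space M "exp 1" by unfold_locales simp
  define pz where "pz v = prob (Z -` {v} \<inter> space M)" for v
  define pyz where "pyz v = prob ((\<lambda>\<omega>. (Y \<omega>, Z \<omega>)) -` {v} \<inter> space M)" for v
  define pxz where "pxz v = prob ((\<lambda>\<omega>. (X \<omega>, Z \<omega>)) -` {v} \<inter> space M)" for v
  define pxyz where "pxyz v = prob ((\<lambda>\<omega>. (X \<omega>, Y \<omega>, Z \<omega>)) -` {v} \<inter> space M)" for v
  have sYZ: "simple_function M (\<lambda>\<omega>. (Y \<omega>, Z \<omega>))" using Y Z by auto
  have sXZ: "simple_function M (\<lambda>\<omega>. (X \<omega>, Z \<omega>))" using X Z by auto
  have sXYZ: "simple_function M (\<lambda>\<omega>. (X \<omega>, Y \<omega>, Z \<omega>))" using X Y Z by auto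
  have "0 \<le> conditional_mutual_information (exp 1) (count_space (X`space M)) (count_space (Y`space M)) (count_space (Z`space M)) X Y Z" by (rule conditional_mutual_information_nonneg[OF X Y Z])
  also have "conditional_mutual_information (exp 1) (count_space (X`space M)) (count_space (Y`space M)) (count_space (Z`space M)) X Y Z = (\<Sum>(x, y, z)\<in>(\<lambda>x. (X x, Y x, Z x))`space M.
       pxyz (x, y, z) * log (exp 1) (pxyz (x, y, z) / (pxz (x, z) * (pyz (y,z) / pz z))))"
    by (rule conditional_mutual_information_eq)
       (auto intro!: simple_distributedI sYZ sXZ sXYZ Z simp: pz_def pyz_def pxz_def pxyz_def)
  also have "\<dots> = (\<Sum>w\<in>(\<lambda>x. (X x, Y x, Z x))`space M. pxyz w * ln (pxyz w))
     - (\<Sum>w\<in>(\<lambda>x. (X x, Y x, Z x))`space M. pxyz w * ln (pxz (fst w, snd (snd w))))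
     - (\<Sum>w\<in>(\<lambda>x. (X x, Y x, Z x))`space M. pxyz w * ln (pyz (snd w)))
     + (\<Sum>w\<in>(\<lambda>x. (X x, Y x, Z x))`space M. pxyz w * ln (pz (snd (snd w))))"
  proof -
    let ?S = "(\<lambda>x. (X x, Y x, Z x))`space M"
    have "pxyz w * log (exp 1) (pxyz w / (pxz (fst w, snd (snd w)) * (pyz (snd w) / pz (snd (snd w)))))
      = pxyz w * ln (pxyz w) - pxyz w * ln (pxz (fst w, snd (snd w))) - pxyz w * ln (pyz (snd w))
        + pxyz w * ln (pz (snd (snd w)))" if "w \<in> ?S" for w
    proof (cases "pxyz w = 0")
      case False
      obtain x y z where w: "w = (x,y,z)" by (cases w) auto
      have pos: "0 < pxyz w" using False unfolding pxyz_def using measure_nonneg[of M] by (simp add: less_le)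
      have "pxyz w \<le> pxz (x,z)" unfolding pxyz_def pxz_def w
        by (rule finite_measure_mono) (use sXZ simple_functionD(2) in auto)
      moreover have "pxyz w \<le> pyz (y,z)" unfolding pxyz_def pyz_def w
        by (rule finite_measure_mono) (use sYZ simple_functionD(2) in auto)
      moreover have "pxyz w \<le> pz z" unfolding pxyz_def pz_def w
        by (rule finite_measure_mono) (use Z simple_functionD(2) in auto)
      ultimately have "0 < pxz (x,z)" "0 < pyz (y,z)" "0 < pz z" using pos by linarith+
      then show ?thesis using pos unfolding w
        by (simp add: log_def ln_div ln_mult algebra_simps)
    qed (simp)
    then have "(\<Sum>w\<in>?S. pxyz w * log (exp 1) (pxyz w / (pxz (fst w, snd (snd w)) * (pyz (snd w) / pz (snd (snd w))))))
      = (\<Sum>w\<in>?S. pxyz w * ln (pxyz w) - pxyz w * ln (pxz (fst w, snd (snd w))) - pxyz w * ln (pyz (snd w))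
        + pxyz w * ln (pz (snd (snd w))))" by (rule sum.cong[OF refl])
    moreover have "(\<Sum>(x, y, z)\<in>?S.
       pxyz (x, y, z) * log (exp 1) (pxyz (x, y, z) / (pxz (x, z) * (pyz (y,z) / pz z))))
      = (\<Sum>w\<in>?S. pxyz w * log (exp 1) (pxyz w / (pxz (fst w, snd (snd w)) * (pyz (snd w) / pz (snd (snd w))))))"
      by (simp add: split_beta')
    ultimately show ?thesis by (simp add: sum.distrib sum_subtractf)
  qed
  also have "(\<Sum>w\<in>(\<lambda>x. (X x, Y x, Z x))`space M. pxyz w * ln (pxz (fst w, snd (snd w))))
      = (\<Sum>v\<in>(\<lambda>\<omega>. (X \<omega>, Z \<omega>))`space M. pxz v * ln (pxz v))"
    unfolding pxyz_def pxz_def by (rule marg[OF sXYZ]) auto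
  also have "(\<Sum>w\<in>(\<lambda>x. (X x, Y x, Z x))`space M. pxyz w * ln (pyz (snd w)))
      = (\<Sum>v\<in>(\<lambda>\<omega>. (Y \<omega>, Z \<omega>))`space M. pyz v * ln (pyz v))"
    unfolding pxyz_def pyz_def by (rule marg[OF sXYZ]) auto
  also have "(\<Sum>w\<in>(\<lambda>x. (X x, Y x, Z x))`space M. pxyz w * ln (pz (snd (snd w))))
      = (\<Sum>v\<in>Z`space M. pz v * ln (pz v))"
    unfolding pxyz_def pz_def by (rule marg[OF sXYZ]) auto
  finally show ?thesis unfolding Hf_def pxyz_def pxz_def pyz_def pz_def by simp
qed

end



lemma mpdsD:
  assumes "mpds M T"
  shows "prob_space M" "T \<in> measurable M M"
    "\<And>B. B \<in> sets M \<Longrightarrow> measure M (T -` B \<inter> space M) = measure M B"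
  using assms unfolding mpds_def by auto

lemma Hf_shift:
  assumes mpds: "mpds M T" and F: "simple_function M F"
  shows "simple_function M (\<lambda>\<omega>. F (T \<omega>))" "Hf M (\<lambda>\<omega>. F (T \<omega>)) = Hf M F"
proof -
  interpret prob_space M using mpdsD[OF mpds] by simp
  have Tm: "T \<in> measurable M M" using mpdsD[OF mpds] by simp
  have Tsp: "\<And>\<omega>. \<omega> \<in> space M \<Longrightarrow> T \<omega> \<in> space M" by (rule measurable_space[OF Tm])
  have pre: "(\<lambda>\<omega>. F (T \<omega>)) -` {v} \<inter> space M = T -` (F -` {v} \<inter> space M) \<inter> space M" for v
    using Tsp by auto
  have pr: "prob ((\<lambda>\<omega>. F (T \<omega>)) -` {v} \<inter> space M) = prob (F -` {v} \<inter> space M)" for v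
    unfolding pre by (rule mpdsD(3)[OF mpds]) (use F simple_functionD(2) in auto)
  have img: "(\<lambda>\<omega>. F (T \<omega>)) ` space M \<subseteq> F ` space M" using Tsp by auto
  have fin: "finite (F ` space M)" using F simple_functionD by auto
  show "simple_function M (\<lambda>\<omega>. F (T \<omega>))"
    unfolding simple_function_def
  proof (intro conjI ballI)
    show "finite ((\<lambda>\<omega>. F (T \<omega>)) ` space M)" using finite_subset[OF img fin] .
    fix v show "(\<lambda>\<omega>. F (T \<omega>)) -` {v} \<inter> space M \<in> sets M"
      unfolding pre by (rule measurable_sets[OF Tm]) (rule simple_functionD(2)[OF F])
  qed
  have "(\<Sum>v\<in>(\<lambda>\<omega>. F (T \<omega>)) ` space M. prob (F -` {v} \<inter> space M) * ln (prob (F -` {v} \<inter> space M)))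
     = (\<Sum>v\<in>F ` space M. prob (F -` {v} \<inter> space M) * ln (prob (F -` {v} \<inter> space M)))"
  proof (rule sum.mono_neutral_left[OF fin img])
    show "\<forall>v\<in>F ` space M - (\<lambda>\<omega>. F (T \<omega>)) ` space M.
      prob (F -` {v} \<inter> space M) * ln (prob (F -` {v} \<inter> space M)) = 0"
    proof
      fix v assume v: "v \<in> F ` space M - (\<lambda>\<omega>. F (T \<omega>)) ` space M"
      then have "(\<lambda>\<omega>. F (T \<omega>)) -` {v} \<inter> space M = {}" by (auto simp: image_iff)
      then have "prob (F -` {v} \<inter> space M) = 0" using pr[of v] by simp
      then show "prob (F -` {v} \<inter> space M) * ln (prob (F -` {v} \<inter> space M)) = 0" by simp
    qed
  qed
  then show "Hf M (\<lambda>\<omega>. F (T \<omega>)) = Hf M F" unfolding Hf_def pr by simp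
qed

definition Gs :: "('a \<Rightarrow> 'a) \<Rightarrow> ('a \<Rightarrow> 'b) \<Rightarrow> nat \<Rightarrow> 'a \<Rightarrow> nat \<Rightarrow> 'b" where
  "Gs T c n \<omega> = (\<lambda>k\<in>{..<n}. c ((T ^^ k) \<omega>))"

lemma Gs_simple:
  assumes Tm: "T \<in> measurable M M" and c: "simple_function M c"
  shows "simple_function M (Gs T c n)"
proof -
  have Tk: "\<And>k \<omega>. \<omega> \<in> space M \<Longrightarrow> (T ^^ k) \<omega> \<in> space M"
    by (rule measurable_space[OF measurable_compose_n[OF Tm]])
  have img: "Gs T c n ` space M \<subseteq> (\<Pi>\<^sub>E k\<in>{..<n}. c ` space M)"
  proof (rule image_subsetI)
    fix \<omega> assume "\<omega> \<in> space M"
    then show "Gs T c n \<omega> \<in> (\<Pi>\<^sub>E k\<in>{..<n}. c ` space M)"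
      unfolding Gs_def using Tk by (subst restrict_PiE_iff) auto
  qed
  have fin: "finite (c ` space M)" using c simple_functionD by auto
  have "Gs T c n -` {b} \<inter> space M \<in> sets M" if b: "b \<in> (\<Pi>\<^sub>E k\<in>{..<n}. c ` space M)" for b
  proof -
    have eq: "Gs T c n -` {b} \<inter> space M = {\<omega>\<in>space M. \<forall>k\<in>{..<n}. (T ^^ k) \<omega> \<in> c -` {b k} \<inter> space M}"
      using b Tk unfolding Gs_def by (auto simp: PiE_iff extensional_def fun_eq_iff)
    have [measurable]: "c -` {b k} \<inter> space M \<in> sets M" for k using c simple_functionD(2) by auto
    note [measurable] = measurable_compose_n[OF Tm]
    show ?thesis unfolding eq by measurable
  qed
  then show ?thesis unfolding simple_function_def
    using img finite_subset[OF img] fin by (auto simp: finite_PiE)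
qed

lemma Gs_restr: "Gs T c n \<omega> = (\<lambda>k\<in>{..<n}. Gs T c (Suc n) \<omega> k)"
  unfolding Gs_def by (auto simp: fun_eq_iff)

lemma funpow_pos: "0 < x \<Longrightarrow> (T ^^ x) \<omega> = (T ^^ (x - 1)) (T \<omega>)"
  by (cases x) (simp_all add: funpow_swap1)

lemma Gs_Suc1: "(c \<omega>, Gs T c m (T \<omega>)) = (\<lambda>p. (p 0, \<lambda>k\<in>{..<m}. p (Suc k))) (Gs T c (Suc m) \<omega>)"
  unfolding Gs_def by (auto simp: fun_eq_iff funpow_swap1)

lemma Gs_Suc2: "Gs T c (Suc m) \<omega> = (\<lambda>(a, q). (\<lambda>k\<in>{..<Suc m}. if k = 0 then a else q (k - 1))) (c \<omega>, Gs T c m (T \<omega>))"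
  unfolding Gs_def by (auto simp: fun_eq_iff funpow_pos)

lemma ent_seq:
  assumes mpds: "mpds M T" and c: "simple_function M c"
  defines "a \<equiv> (\<lambda>n. Hf M (Gs T c (Suc n)) - Hf M (Gs T c n))"
  shows "convergent a" "lim a \<le> Hf M (Gs T c 2) - Hf M (Gs T c 1)"
proof -
  interpret prob_space M using mpdsD[OF mpds] by simp
  have Tm: "T \<in> measurable M M" using mpdsD[OF mpds] by simp
  have sG: "\<And>n. simple_function M (Gs T c n)" using Gs_simple[OF Tm c] .
  have sGT: "\<And>n. simple_function M (\<lambda>\<omega>. Gs T c n (T \<omega>))" using Hf_shift[OF mpds sG] by simp
  have nn: "0 \<le> a n" for n
    using Hf_DP[OF sG[of "Suc n"], of "Gs T c n", OF Gs_restr] unfolding a_def by simp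
  have pairH: "Hf M (Gs T c (Suc m)) = Hf M (\<lambda>\<omega>. (c \<omega>, Gs T c m (T \<omega>)))" for m
    by (rule Hf_eq[OF sG Gs_Suc1 Gs_Suc2, symmetric])
  have dec: "a (Suc n) \<le> a n" for n
  proof -
    let ?Y = "\<lambda>\<omega>. Gs T c (Suc n) (T \<omega>)" and ?Z = "\<lambda>\<omega>. Gs T c n (T \<omega>)"
    have ZY: "?Z \<omega> = (\<lambda>k\<in>{..<n}. ?Y \<omega> k)" for \<omega> by (rule Gs_restr)
    have sCY: "simple_function M (\<lambda>\<omega>. (c \<omega>, ?Y \<omega>))" using c sGT by auto
    have sY: "simple_function M ?Y" using sGT by auto
    have e1: "Hf M (\<lambda>\<omega>. (c \<omega>, ?Y \<omega>, ?Z \<omega>)) = Hf M (\<lambda>\<omega>. (c \<omega>, ?Y \<omega>))"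
      by (rule Hf_eq[OF sCY, where h="\<lambda>(a,y). (a, y, \<lambda>k\<in>{..<n}. y k)" and h'="\<lambda>(a,y,z). (a,y)"])
         (auto simp: ZY)
    have e2: "Hf M (\<lambda>\<omega>. (?Y \<omega>, ?Z \<omega>)) = Hf M ?Y"
      by (rule Hf_eq[OF sY, where h="\<lambda>y. (y, \<lambda>k\<in>{..<n}. y k)" and h'="fst"]) (auto simp: ZY)
    have ssa: "Hf M (\<lambda>\<omega>. (c \<omega>, ?Y \<omega>, ?Z \<omega>)) + Hf M ?Z \<le> Hf M (\<lambda>\<omega>. (c \<omega>, ?Z \<omega>)) + Hf M (\<lambda>\<omega>. (?Y \<omega>, ?Z \<omega>))"
      by (rule Hf_SSA) (use c sGT in auto)
    have "a (Suc n) = Hf M (\<lambda>\<omega>. (c \<omega>, ?Y \<omega>)) - Hf M ?Y"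
      unfolding a_def pairH[of "Suc n"] Hf_shift(2)[OF mpds sG] by simp
    moreover have "a n = Hf M (\<lambda>\<omega>. (c \<omega>, ?Z \<omega>)) - Hf M ?Z"
      unfolding a_def pairH[of n] Hf_shift(2)[OF mpds sG] by simp
    ultimately show ?thesis using ssa e1 e2 by simp
  qed
  have ds: "decseq a" using dec by (simp add: decseq_SucI)
  obtain L where L: "a \<longlonglongrightarrow> L" "\<forall>i. L \<le> a i"
    by (rule decseq_convergent[OF ds, of 0]) (use nn in auto)
  show "convergent a" using L by (auto simp: convergent_def)
  have "lim a = L" using L(1) by (rule limI)
  moreover have "a 1 = Hf M (Gs T c 2) - Hf M (Gs T c 1)" unfolding a_def by (simp add: numeral_2_eq_2)
  moreover have "L \<le> a 1" using L(2) by simp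
  ultimately show "lim a \<le> Hf M (Gs T c 2) - Hf M (Gs T c 1)" by simp
qed

lemma PB1:
  assumes "finite A" "g ` space M \<subseteq> A"
  shows "part_entropy M ((\<lambda>v. {\<omega>\<in>space M. g \<omega> = v}) ` A) = Hf M g"
proof -
  let ?L = "\<lambda>v. {\<omega>\<in>space M. g \<omega> = v}"
  have sub: "?L ` (g ` space M) \<subseteq> ?L ` A" using assms by auto
  have "(\<Sum>S\<in>?L ` (g ` space M). measure M S * ln (measure M S)) = (\<Sum>S\<in>?L ` A. measure M S * ln (measure M S))"
  proof (rule sum.mono_neutral_left)
    show "\<forall>S\<in>?L ` A - ?L ` (g ` space M). measure M S * ln (measure M S) = 0"
    proof
      fix S assume S: "S \<in> ?L ` A - ?L ` (g ` space M)"
      have "S = {}"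
      proof (rule ccontr)
        assume "S \<noteq> {}"
        then obtain x where "x \<in> S" by auto
        then have "S = ?L (g x)" "x \<in> space M" using S by auto
        then show False using S by auto
      qed
      then show "measure M S * ln (measure M S) = 0" by simp
    qed
  qed (use assms sub in auto)
  moreover have "inj_on ?L (g ` space M)" by (auto simp: inj_on_def)
  then have "(\<Sum>S\<in>?L ` (g ` space M). measure M S * ln (measure M S))
      = (\<Sum>v\<in>g ` space M. measure M (?L v) * ln (measure M (?L v)))"
    by (simp add: sum.reindex)
  moreover have "(\<Sum>v\<in>g ` space M. measure M (?L v) * ln (measure M (?L v)))
     = (\<Sum>v\<in>g ` space M. measure M (g -` {v} \<inter> space M) * ln (measure M (g -` {v} \<inter> space M)))"
  proof (rule sum.cong[OF refl])
    fix v have "?L v = g -` {v} \<inter> space M" by blast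
    then show "measure M (?L v) * ln (measure M (?L v))
      = measure M (g -` {v} \<inter> space M) * ln (measure M (g -` {v} \<inter> space M))" by (simp only:)
  qed
  ultimately show ?thesis unfolding part_entropy_def Hf_def by (simp only:)
qed

lemma PB2:
  assumes Tm: "T \<in> measurable M M" and A: "finite A" "g ` space M \<subseteq> A"
  defines "Q \<equiv> (\<lambda>v. {\<omega>\<in>space M. g \<omega> = v}) ` A"
  defines "c \<equiv> (\<lambda>\<omega>. {\<omega>'\<in>space M. g \<omega>' = g \<omega>})"
  shows "part_entropy M (refine M T Q n) = Hf M (Gs T c n)"
proof -
  have Tk: "\<And>k \<omega>. \<omega> \<in> space M \<Longrightarrow> (T ^^ k) \<omega> \<in> space M"
    by (rule measurable_space[OF measurable_compose_n[OF Tm]])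
  have key: "x \<in> space M \<Longrightarrow> S \<in> Q \<Longrightarrow> c x = S \<longleftrightarrow> x \<in> S" for x S
    unfolding Q_def c_def by auto
  have img: "Gs T c n ` space M \<subseteq> (\<Pi>\<^sub>E k\<in>{..<n}. Q)"
  proof (rule image_subsetI)
    fix \<omega> assume "\<omega> \<in> space M"
    then show "Gs T c n \<omega> \<in> (\<Pi>\<^sub>E k\<in>{..<n}. Q)"
      unfolding Gs_def Q_def c_def using Tk A
      by (subst restrict_PiE_iff) (auto intro!: image_eqI[where x="g ((T ^^ _) \<omega>)"])
  qed
  have eq: "{\<omega>\<in>space M. \<forall>k<n. (T ^^ k) \<omega> \<in> a k} = {\<omega>\<in>space M. Gs T c n \<omega> = a}"
    if a: "a \<in> (\<Pi>\<^sub>E k\<in>{..<n}. Q)" for a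
  proof -
    have "Gs T c n \<omega> = a \<longleftrightarrow> (\<forall>k<n. (T ^^ k) \<omega> \<in> a k)" if "\<omega> \<in> space M" for \<omega>
    proof -
      have "Gs T c n \<omega> = a \<longleftrightarrow> (\<forall>k<n. c ((T ^^ k) \<omega>) = a k)"
        using a unfolding Gs_def by (auto simp: PiE_iff extensional_def fun_eq_iff)
      also have "\<dots> \<longleftrightarrow> (\<forall>k<n. (T ^^ k) \<omega> \<in> a k)"
        using key Tk that a by (auto simp: PiE_iff)
      finally show ?thesis .
    qed
    then show ?thesis by auto
  qed
  have "refine M T Q n = (\<lambda>v. {\<omega>\<in>space M. Gs T c n \<omega> = v}) ` (\<Pi>\<^sub>E k\<in>{..<n}. Q)"
    unfolding refine_def using eq by (auto intro!: image_cong)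
  moreover have "finite Q" unfolding Q_def using A by simp
  ultimately show ?thesis using PB1[OF _ img] by (simp add: finite_PiE)
qed



definition pat :: "nat \<Rightarrow> (nat \<Rightarrow> real) \<Rightarrow> nat list" where
  "pat d x = (THE r. has_pattern x d r)"

lemma pat_spec: "has_pattern x d (pat d x)"
  unfolding pat_def by (rule theI'[of "has_pattern x d"]) (use has_pattern_ex has_pattern_uniq in blast)

lemma pat_eq: "has_pattern x d r \<Longrightarrow> pat d x = r"
  using pat_spec has_pattern_uniq by metis

lemma pat_perms: "pat d x \<in> perms d"
  using pat_spec has_pattern_Rr by blast

lemma pat_cong:
  assumes "\<And>a b. a \<le> d \<Longrightarrow> b \<le> d \<Longrightarrow> Rr x a b = Rr y a b"
  shows "pat d x = pat d y"
proof -
  have "has_pattern x d = has_pattern y d" using has_pattern_cong[OF assms] by blast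
  then show ?thesis unfolding pat_def by simp
qed

lemma pat_Rr:
  assumes "pat d x = pat d y" "a \<le> d" "b \<le> d"
  shows "Rr x a b = Rr y a b"
  using has_pattern_Rr_eq[OF pat_spec[of x d] _ assms(2,3), of y] pat_spec[of y d] assms(1) by simp

lemma finite_perms: "finite (perms d)"
proof -
  have "perms d \<subseteq> {xs. set xs \<subseteq> {0..d} \<and> length xs = Suc d}" unfolding perms_def by auto
  then show ?thesis using finite_subset finite_lists_length_eq[of "{0..d}" "Suc d"] by auto
qed

lemma sort_le_perm:
  fixes H :: "nat \<Rightarrow> real"
  assumes "1 \<le> d" "H (Suc d) / real (Suc d) \<le> H d / real d"
  shows "H (Suc d) - H d \<le> H d / real d"
proof -
  have p: "0 < real d" using assms by simp
  have "H (Suc d) * real d \<le> H d * (real d + 1)"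
    using assms(2) p by (simp add: field_simps)
  then show ?thesis using p by (simp add: field_simps)
qed

lemma cesaro_lb:
  fixes H :: "nat \<Rightarrow> real"
  assumes D: "\<And>d. d \<ge> D \<Longrightarrow> c < H (Suc d) - H d" and cc: "c' < c"
  shows "\<exists>D'. \<forall>d\<ge>D'. c' < H d / real d"
proof -
  have lin: "H D + real (d - D) * c \<le> H d" if "d \<ge> D" for d
    using that
  proof (induction d rule: dec_induct)
    case base then show ?case by simp
  next
    case (step n)
    then have "c < H (Suc n) - H n" using D by simp
    moreover have "real (Suc n - D) = real (n - D) + 1" using step by simp
    ultimately show ?case using step by (simp add: algebra_simps)
  qed
  define K where "K = H D - real D * c"
  define D' where "D' = max (Suc D) (nat \<lceil>\<bar>K\<bar> / (c - c')\<rceil> + 1)"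
  have "c' < H d / real d" if d: "d \<ge> D'" for d
  proof -
    have dD: "d \<ge> Suc D" using d D'_def by simp
    have pos: "0 < real d" using dD by simp
    have "real d > \<bar>K\<bar> / (c - c')"
    proof -
      have "real (nat \<lceil>\<bar>K\<bar> / (c - c')\<rceil> + 1) \<le> real d" using d D'_def by simp
      moreover have "\<bar>K\<bar> / (c - c') < real (nat \<lceil>\<bar>K\<bar> / (c - c')\<rceil> + 1)" by linarith
      ultimately show ?thesis by simp
    qed
    then have "\<bar>K\<bar> < (c - c') * real d" using cc by (simp add: field_simps)
    then have k: "c' * real d < K + c * real d" by (simp add: algebra_simps)
    have "H d \<ge> K + c * real d"
      using lin[of d] dD unfolding K_def by (simp add: of_nat_diff algebra_simps)
    then have "c' * real d < H d" using k by simp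
    then show ?thesis using pos by (simp add: field_simps)
  qed
  then show ?thesis by blast
qed

lemma liminf_cesaro:
  fixes H :: "nat \<Rightarrow> real"
  assumes L: "(\<lambda>d. ereal (H (Suc d) - H d)) \<longlonglongrightarrow> L"
  shows "L \<le> liminf (\<lambda>d. ereal (H d / real d))"
  unfolding le_Liminf_iff
proof (intro allI impI)
  fix y assume y: "y < L"
  obtain c where c: "y < ereal c" "ereal c < L" using ereal_dense2[OF y] by blast
  obtain c' where c': "y < ereal c'" "ereal c' < ereal c" using ereal_dense2[OF c(1)] by blast
  have "eventually (\<lambda>d. ereal c < ereal (H (Suc d) - H d)) sequentially"
    using order_tendstoD(1)[OF L c(2)] .
  then obtain D where D: "\<And>d. d \<ge> D \<Longrightarrow> c < H (Suc d) - H d"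
    unfolding eventually_sequentially by auto
  obtain D' where D': "\<forall>d\<ge>D'. c' < H d / real d" using cesaro_lb[where H=H and D=D and c=c and c'=c', OF D] c'(2) by auto
  show "eventually (\<lambda>d. y < ereal (H d / real d)) sequentially"
    unfolding eventually_sequentially
  proof (intro exI allI impI)
    fix d assume "D' \<le> d"
    then have "ereal c' < ereal (H d / real d)" using D' by simp
    then show "y < ereal (H d / real d)" using c'(1) by (meson less_trans)
  qed
qed



theorem theorem1:
  fixes M :: "'a::topological_space measure" and T :: "'a \<Rightarrow> 'a"
    and X :: "nat \<Rightarrow> 'a \<Rightarrow> real" and N :: nat
  assumes "mpds M T"
    and "N \<ge> 1"
    and "\<forall>i<N. X i \<in> borel_measurable M"
    and OR: "(\<lambda>d. ereal (ent_rel M T (ord_part M T X N d))) \<longlonglongrightarrow> ks_entropy M T"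
  shows "(ks_entropy M T \<le> limsup (\<lambda>d. ereal (cond_entropy M T X N d)) \<and>
          limsup (\<lambda>d. ereal (cond_entropy M T X N d)) \<le> limsup (\<lambda>d. ereal (sort_entropy M T X N d)) \<and>
          ks_entropy M T \<le> liminf (\<lambda>d. ereal (cond_entropy M T X N d)) \<and>
          liminf (\<lambda>d. ereal (cond_entropy M T X N d)) \<le> liminf (\<lambda>d. ereal (sort_entropy M T X N d)))
       \<and> (((\<exists>d0\<ge>1. \<forall>d\<ge>d0. perm_entropy M T X N d \<ge> perm_entropy M T X N (Suc d)) \<or>
            (\<exists>L. (\<lambda>d. ereal (sort_entropy M T X N d)) \<longlonglongrightarrow> L))
          \<longrightarrow> limsup (\<lambda>d. ereal (sort_entropy M T X N d)) \<le> limsup (\<lambda>d. ereal (perm_entropy M T X N d)) \<and>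
              liminf (\<lambda>d. ereal (sort_entropy M T X N d)) \<le> liminf (\<lambda>d. ereal (perm_entropy M T X N d)))"
proof -
  note mp = mpdsD[OF assms(1)]
  interpret prob_space M using mp(1) .
  have Tm: "T \<in> measurable M M" using mp(2) .
  define vec where "vec d i \<omega> = (\<lambda>j. X i ((T ^^ (d - j)) \<omega>))" for d i \<omega>
  define pi where "pi d \<omega> = (\<lambda>i\<in>{..<N}. pat d (vec d i \<omega>))" for d \<omega>
  define A where "A d = (\<Pi>\<^sub>E i\<in>{..<N}. perms d)" for d
  define c where "c d = (\<lambda>\<omega>. {\<omega>'\<in>space M. pi d \<omega>' = pi d \<omega>})" for d
  define H where "H d = part_entropy M (ord_part M T X N d)" for d
  have finA: "finite (A d)" for d unfolding A_def by (simp add: finite_PiE finite_perms)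
  have imgA: "pi d ` space M \<subseteq> A d" for d
  proof (rule image_subsetI)
    fix \<omega> show "pi d \<omega> \<in> A d" unfolding pi_def A_def by (subst restrict_PiE_iff) (simp add: pat_perms)
  qed
  have char: "pi d \<omega> = ps \<longleftrightarrow> (\<forall>i<N. has_pattern (vec d i \<omega>) d (ps i))" if ps: "ps \<in> A d" for d \<omega> ps
  proof
    assume h: "\<forall>i<N. has_pattern (vec d i \<omega>) d (ps i)"
    then have "\<forall>i<N. pat d (vec d i \<omega>) = ps i" using pat_eq by blast
    then show "pi d \<omega> = ps" using ps unfolding pi_def A_def
      by (auto simp: fun_eq_iff PiE_iff extensional_def)
  next
    assume "pi d \<omega> = ps"
    then have "\<forall>i<N. ps i = pat d (vec d i \<omega>)" unfolding pi_def by auto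
    then show "\<forall>i<N. has_pattern (vec d i \<omega>) d (ps i)" using pat_spec by simp
  qed
  have op: "ord_part M T X N d = (\<lambda>v. {\<omega>\<in>space M. pi d \<omega> = v}) ` A d" for d
    unfolding ord_part_def
  proof (intro image_cong)
    show "(\<Pi>\<^sub>E i\<in>{..<N}. perms d) = A d" unfolding A_def ..
    fix ps assume "ps \<in> A d"
    then show "{\<omega> \<in> space M. \<forall>i<N. has_pattern (\<lambda>j. X i ((T ^^ (d - j)) \<omega>)) d (ps i)} = {\<omega>\<in>space M. pi d \<omega> = ps}"
      using char unfolding vec_def by auto
  qed
  have lev: "{\<omega>\<in>space M. pi d \<omega> = v} \<in> sets M" for d v
  proof (cases "v \<in> A d")
    case False
    then have e: "{\<omega>\<in>space M. pi d \<omega> = v} = {}" using imgA by blast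
    show ?thesis unfolding e by (rule sets.empty_sets)
  next
    case True
    then have vp: "\<forall>i<N. v i \<in> perms d" unfolding A_def by auto
    have eq: "{\<omega>\<in>space M. pi d \<omega> = v} = {\<omega>\<in>space M. \<forall>i\<in>{..<N}. \<forall>l\<in>{1..d}. Rr (vec d i \<omega>) (v i ! (l-1)) (v i ! l)}"
      using char[OF True] vp by (auto simp: has_pattern_Rr)
    have "Measurable.pred M (\<lambda>\<omega>. \<forall>i\<in>{..<N}. \<forall>l\<in>{1..d}. Rr (vec d i \<omega>) (v i ! (l-1)) (v i ! l))"
    proof (intro pred_intros_finite(3) finite_lessThan finite_atLeastAtMost)
      fix i l assume i: "i \<in> {..<N}"
      have [measurable]: "X i \<in> borel_measurable M" using assms(3) i by auto
      note [measurable] = measurable_compose_n[OF Tm]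
      show "Measurable.pred M (\<lambda>\<omega>. Rr (vec d i \<omega>) (v i ! (l-1)) (v i ! l))"
        unfolding Rr_def vec_def by measurable
    qed
    then show ?thesis unfolding eq pred_def by simp
  qed
  have spi: "simple_function M (pi d)" for d
    unfolding simple_function_def
  proof (intro conjI ballI)
    show "finite (pi d ` space M)" using finite_subset[OF imgA finA] .
    fix x have "pi d -` {x} \<inter> space M = {\<omega>\<in>space M. pi d \<omega> = x}" by blast
    then show "pi d -` {x} \<inter> space M \<in> sets M" using lev by simp
  qed
  have Hpi: "H d = Hf M (pi d)" for d
    unfolding H_def op by (rule PB1[OF finA imgA])
  have Href: "part_entropy M (refine M T (ord_part M T X N d) n) = Hf M (Gs T (c d) n)" for d n
    unfolding op c_def by (rule PB2[OF Tm finA imgA])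
  have sc: "simple_function M (c d)" for d
    by (rule simple_fun_of[OF spi, where h="\<lambda>p. {\<omega>'\<in>space M. pi d \<omega>' = p}"]) (simp add: c_def)
  have H1: "Hf M (Gs T (c d) 1) = H d" for d
  proof -
    have "Hf M (Gs T (c d) 1) = Hf M (pi d)"
    proof (rule Hf_eq[OF spi, where h="\<lambda>p. (\<lambda>k\<in>{..<1}. {\<omega>'\<in>space M. pi d \<omega>' = p})"
          and h'="\<lambda>q. pi d (SOME \<omega>'. \<omega>' \<in> q 0)"])
      fix \<omega> assume "\<omega> \<in> space M"
      show "Gs T (c d) 1 \<omega> = (\<lambda>k\<in>{..<1}. {\<omega>'\<in>space M. pi d \<omega>' = pi d \<omega>})"
        unfolding Gs_def c_def by (auto simp: fun_eq_iff)
      have "\<omega> \<in> Gs T (c d) 1 \<omega> 0" using \<open>\<omega> \<in> space M\<close> unfolding Gs_def c_def by simp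
      then have "(SOME \<omega>'. \<omega>' \<in> Gs T (c d) 1 \<omega> 0) \<in> Gs T (c d) 1 \<omega> 0" by (rule someI)
      then show "pi d \<omega> = pi d (SOME \<omega>'. \<omega>' \<in> Gs T (c d) 1 \<omega> 0)" unfolding Gs_def c_def by simp
    qed
    then show ?thesis using Hpi by simp
  qed
  have ent_le: "ent_rel M T (ord_part M T X N d) \<le> cond_entropy M T X N d" for d
  proof -
    have "ent_rel M T (ord_part M T X N d) = lim (\<lambda>n. Hf M (Gs T (c d) (Suc n)) - Hf M (Gs T (c d) n))"
      unfolding ent_rel_def Href ..
    also have "\<dots> \<le> Hf M (Gs T (c d) 2) - Hf M (Gs T (c d) 1)" by (rule ent_seq(2)[OF assms(1) sc])
    also have "\<dots> = cond_entropy M T X N d" unfolding cond_entropy_def Href H1 H_def ..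
    finally show ?thesis .
  qed
  have key: "Gs T (c d) 2 \<omega> = Gs T (c d) 2 \<omega>'"
    if w: "\<omega> \<in> space M" "\<omega>' \<in> space M" and eq: "pi (Suc d) \<omega> = pi (Suc d) \<omega>'" for d \<omega> \<omega>'
  proof -
    have pe: "pat (Suc d) (vec (Suc d) i \<omega>) = pat (Suc d) (vec (Suc d) i \<omega>')" if "i < N" for i
      using fun_cong[OF eq, of i] that unfolding pi_def by simp
    have sh: "vec d i z = (\<lambda>j. vec (Suc d) i z (Suc j))" for i z unfolding vec_def by simp
    have shT: "vec d i (T z) j = vec (Suc d) i z j" if "j \<le> d" for i z j
    proof -
      have "Suc d - j = Suc (d - j)" using that by simp
      then show ?thesis unfolding vec_def by (simp add: funpow_swap1)
    qed
    have RrS: "Rr (\<lambda>j. y (Suc j)) a b = Rr y (Suc a) (Suc b)" for y a b unfolding Rr_def by simp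
    have p1: "pi d \<omega> = pi d \<omega>'"
    proof -
      have "pat d (vec d i \<omega>) = pat d (vec d i \<omega>')" if "i < N" for i
      proof (rule pat_cong)
        fix a b assume "a \<le> d" "b \<le> d"
        then show "Rr (vec d i \<omega>) a b = Rr (vec d i \<omega>') a b"
          unfolding sh RrS using pat_Rr[OF pe[OF that], of "Suc a" "Suc b"] by simp
      qed
      then show ?thesis unfolding pi_def by (auto simp: fun_eq_iff)
    qed
    have p2: "pi d (T \<omega>) = pi d (T \<omega>')"
    proof -
      have "pat d (vec d i (T \<omega>)) = pat d (vec d i (T \<omega>'))" if "i < N" for i
      proof (rule pat_cong)
        fix a b assume ab: "a \<le> d" "b \<le> d"
        have "Rr (vec d i (T \<omega>)) a b = Rr (vec (Suc d) i \<omega>) a b"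
          unfolding Rr_def using shT ab by simp
        moreover have "Rr (vec d i (T \<omega>')) a b = Rr (vec (Suc d) i \<omega>') a b"
          unfolding Rr_def using shT ab by simp
        ultimately show "Rr (vec d i (T \<omega>)) a b = Rr (vec d i (T \<omega>')) a b"
          using pat_Rr[OF pe[OF that], of a b] ab by simp
      qed
      then show ?thesis unfolding pi_def by (auto simp: fun_eq_iff)
    qed
    show ?thesis unfolding Gs_def c_def
    proof (rule ext)
      fix k show "(\<lambda>k\<in>{..<2}. {\<omega>'' \<in> space M. pi d \<omega>'' = pi d ((T ^^ k) \<omega>)}) k =
        (\<lambda>k\<in>{..<2}. {\<omega>'' \<in> space M. pi d \<omega>'' = pi d ((T ^^ k) \<omega>')}) k"
        using p1 p2 by (cases "k < 2") (auto simp: less_2_cases_iff)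
    qed
  qed
  have cond_le: "cond_entropy M T X N d \<le> sort_entropy M T X N d" for d
  proof -
    have "Hf M (Gs T (c d) 2) \<le> Hf M (pi (Suc d))"
    proof (rule Hf_DP[OF spi, where h="\<lambda>p. Gs T (c d) 2 (SOME \<omega>'. \<omega>' \<in> space M \<and> pi (Suc d) \<omega>' = p)"])
      fix \<omega> assume w: "\<omega> \<in> space M"
      have "\<exists>\<omega>'. \<omega>' \<in> space M \<and> pi (Suc d) \<omega>' = pi (Suc d) \<omega>" using w by blast
      then have s: "(SOME \<omega>'. \<omega>' \<in> space M \<and> pi (Suc d) \<omega>' = pi (Suc d) \<omega>) \<in> space M \<and>
          pi (Suc d) (SOME \<omega>'. \<omega>' \<in> space M \<and> pi (Suc d) \<omega>' = pi (Suc d) \<omega>) = pi (Suc d) \<omega>"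
        by (rule someI_ex)
      show "Gs T (c d) 2 \<omega> = Gs T (c d) 2 (SOME \<omega>'. \<omega>' \<in> space M \<and> pi (Suc d) \<omega>' = pi (Suc d) \<omega>)"
        by (rule key) (use w s in auto)
    qed
    then show ?thesis unfolding cond_entropy_def sort_entropy_def Href
      using Hpi[of "Suc d"] unfolding H_def by simp
  qed
  let ?E = "\<lambda>d. ereal (ent_rel M T (ord_part M T X N d))"
  let ?C = "\<lambda>d. ereal (cond_entropy M T X N d)"
  let ?S = "\<lambda>d. ereal (sort_entropy M T X N d)"
  let ?P = "\<lambda>d. ereal (perm_entropy M T X N d)"
  have ks: "liminf ?E = ks_entropy M T" by (rule lim_imp_Liminf[OF _ OR]) simp
  have i1: "ks_entropy M T \<le> liminf ?C" unfolding ks[symmetric]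
    by (rule Liminf_mono) (simp add: ent_le)
  have i2: "liminf ?C \<le> limsup ?C" by (rule Liminf_le_Limsup) simp
  have i3: "limsup ?C \<le> limsup ?S" by (rule Limsup_mono) (simp add: cond_le)
  have i4: "liminf ?C \<le> liminf ?S" by (rule Liminf_mono) (simp add: cond_le)
  have ii: "limsup ?S \<le> limsup ?P \<and> liminf ?S \<le> liminf ?P"
    if h: "(\<exists>d0\<ge>1. \<forall>d\<ge>d0. perm_entropy M T X N d \<ge> perm_entropy M T X N (Suc d)) \<or>
            (\<exists>L. ?S \<longlonglongrightarrow> L)"
  proof -
    have Sd: "sort_entropy M T X N d = H (Suc d) - H d" for d unfolding sort_entropy_def H_def ..
    have Pd: "perm_entropy M T X N d = H d / real d" for d unfolding perm_entropy_def H_def ..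
    show ?thesis using h
    proof
      assume "\<exists>d0\<ge>1. \<forall>d\<ge>d0. perm_entropy M T X N d \<ge> perm_entropy M T X N (Suc d)"
      then obtain d0 where d0: "d0 \<ge> 1" "\<forall>d\<ge>d0. perm_entropy M T X N (Suc d) \<le> perm_entropy M T X N d" by blast
      have ev: "eventually (\<lambda>d. ?S d \<le> ?P d) sequentially"
        unfolding eventually_sequentially
      proof (intro exI allI impI)
        fix d assume "d0 \<le> d"
        then show "?S d \<le> ?P d" using sort_le_perm[of d H] d0 unfolding Sd Pd by simp
      qed
      show ?thesis using Limsup_mono[OF ev] Liminf_mono[OF ev] by simp
    next
      assume "\<exists>L. ?S \<longlonglongrightarrow> L"
      then obtain L where L: "?S \<longlonglongrightarrow> L" by blast
      have "L \<le> liminf ?P" using liminf_cesaro[of H L] L unfolding Sd Pd by simp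
      moreover have "limsup ?S = L" by (rule lim_imp_Limsup[OF _ L]) simp
      moreover have "liminf ?S = L" by (rule lim_imp_Liminf[OF _ L]) simp
      moreover have "liminf ?P \<le> limsup ?P" by (rule Liminf_le_Limsup) simp
      ultimately show ?thesis by simp
    qed
  qed
  show ?thesis using i1 i2 i3 i4 ii by (meson order_trans)
qed


end
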